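(* The sets $NN(32)$ and $NN(34)$ are nonempty. That is, for $n=32$ and for $n=34$ there exist $\{\pm1\}$-sequences $A=a_1,\dots,a_{n+1}$, $B=b_1,\dots,b_{n+1}$, $C=c_1,\dots,c_n$, $D=d_1,\dots,d_n$ such that $N_A(i)+N_B(i)+N_C(i)+N_D(i)=0$ for all integers $i\neq 0$ (equivalently $N(A)+N(B)+N(C)+N(D)=2(2n+1)$), and $b_i=(-1)^{i-1}a_i$ for $1\le i\le n$.
   Context: For a finite sequence $A=a_1,\dots,a_m$ of integers, set $a_k=0$ for $k<1$ and $k>m$, and define its nonperiodic autocorrelation function $N_A(i)=\sum_{j\in\mathbb{Z}} a_j a_{i+j}$ for $i\in\mathbb{Z}$, and its norm $N(A)=\sum_{i\in\mathbb{Z}} N_A(i)x^i\in\mathbb{Z}[x,x^{-1}]$. Base sequences $BS(m,n)$ are quadruples $(A;B;C;D)$ of $\{\pm1\}$-sequences, $A,B$ of length $m$ and $C,D$ of length $n$, with $N(A)+N(B)+N(C)+N(D)=2(m+n)$. The set $NN(n)$ of near-normal sequences consists of those $(A;B;C;D)\in BS(n+1,n)$ with $b_i=(-1)^{i-1}a_i$ for $1\le i\le n$. *)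

theory Defs
  imports Main
begin

definition seq_at :: "int list \<Rightarrow> int \<Rightarrow> int" where
  "seq_at xs k = (if 1 \<le> k \<and> k \<le> int (length xs) then xs ! nat (k - 1) else 0)"

text \<open>Nonperiodic autocorrelation N_A(i) = sum over j in Z of a_j a_{i+j};
  only j in 1..m can contribute, so the sum is taken over that finite range.\<close>
definition autocorr :: "int list \<Rightarrow> int \<Rightarrow> int" where
  "autocorr xs i = (\<Sum>j\<in>{1..int (length xs)}. seq_at xs j * seq_at xs (i + j))"

definition pm1_seq :: "int list \<Rightarrow> bool" where
  "pm1_seq xs \<longleftrightarrow> (\<forall>x\<in>set xs. x = 1 \<or> x = -1)"

text \<open>Base sequences BS(m,n): N(A)+N(B)+N(C)+N(D) = 2(m+n) in Z[x,x^-1],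
  i.e. coefficientwise.\<close>
definition BS :: "nat \<Rightarrow> nat \<Rightarrow> (int list \<times> int list \<times> int list \<times> int list) set" where
  "BS m n = {(A, B, C, D).
     pm1_seq A \<and> pm1_seq B \<and> pm1_seq C \<and> pm1_seq D \<and>
     length A = m \<and> length B = m \<and> length C = n \<and> length D = n \<and>
     (\<forall>i::int. autocorr A i + autocorr B i + autocorr C i + autocorr D i =
                (if i = 0 then 2 * (int m + int n) else 0))}"

definition NN :: "nat \<Rightarrow> (int list \<times> int list \<times> int list \<times> int list) set" where
  "NN n = {(A, B, C, D). (A, B, C, D) \<in> BS (n + 1) n \<and>
     (\<forall>i::int. 1 \<le> i \<and> i \<le> int n \<longrightarrow> seq_at B i = (-1) ^ nat (i - 1) * seq_at A i)}"

end

theory Submission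
  imports Defs
begin

lemma autocorr_out: "int (length xs) \<le> \<bar>i\<bar> \<Longrightarrow> autocorr xs i = 0"
  unfolding autocorr_def by (auto simp: seq_at_def intro!: sum.neutral)

lemma autocorr_list: "autocorr xs i = sum_list (map (\<lambda>j. seq_at xs j * seq_at xs (i+j)) [1..int(length xs)])"
  unfolding autocorr_def by (simp add: sum_set_upto_conv_sum_list_int[symmetric])

definition "Aa = ([1, 1, -1, -1, -1, -1, -1, 1, 1, -1, 1, -1, 1, -1, 1, 1, 1, -1, -1, -1, 1, -1, 1, -1, -1, 1, 1, -1, -1, 1, -1, 1, 1] :: int list)"
definition "Ba = ([1, -1, -1, 1, -1, 1, -1, -1, 1, 1, 1, 1, 1, 1, 1, -1, 1, 1, -1, 1, 1, 1, 1, 1, -1, -1, 1, 1, -1, -1, -1, -1, -1] :: int list)"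
definition "Ca = ([1, -1, 1, -1, -1, 1, -1, 1, 1, 1, 1, -1, -1, 1, -1, -1, -1, 1, 1, -1, -1, 1, 1, 1, -1, 1, -1, 1, 1, 1, -1, -1] :: int list)"
definition "Da = ([1, -1, -1, 1, 1, -1, 1, -1, -1, -1, -1, -1, 1, -1, -1, 1, 1, 1, -1, 1, -1, -1, -1, -1, 1, -1, 1, -1, -1, -1, -1, -1] :: int list)"

lemma chka: "\<forall>i\<in>set [-32..32]. autocorr Aa i + autocorr Ba i + autocorr Ca i + autocorr Da i = (if i = 0 then 2 * (int 33 + int 32) else 0)"
  unfolding autocorr_list seq_at_def Aa_def Ba_def Ca_def Da_def by code_simp

lemma alta: "\<forall>i\<in>set [1..32]. seq_at Ba i = (-1) ^ nat (i - 1) * seq_at Aa i"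
  unfolding seq_at_def Aa_def Ba_def by code_simp

lemma mema: "(Aa, Ba, Ca, Da) \<in> NN 32"
proof -
  have len: "length Aa = 33" "length Ba = 33" "length Ca = 32" "length Da = 32"
    by (simp_all add: Aa_def Ba_def Ca_def Da_def)
  have pm: "pm1_seq Aa" "pm1_seq Ba" "pm1_seq Ca" "pm1_seq Da"
    by (simp_all add: pm1_seq_def Aa_def Ba_def Ca_def Da_def)
  have ac: "autocorr Aa i + autocorr Ba i + autocorr Ca i + autocorr Da i =
                (if i = 0 then 2 * (int 33 + int 32) else 0)" for i
  proof (cases "\<bar>i\<bar> \<le> 32")
    case True
    then have "i \<in> set [-32..32]" by (simp only: set_upto atLeastAtMost_iff) arith
    then show ?thesis using chka by blast
  next
    case False
    then have "i \<noteq> 0" by auto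
    moreover have "autocorr Aa i = 0" "autocorr Ba i = 0" "autocorr Ca i = 0" "autocorr Da i = 0"
      using False by (auto intro!: autocorr_out simp: len)
    ultimately show ?thesis by simp
  qed
  have alt: "seq_at Ba i = (-1) ^ nat (i - 1) * seq_at Aa i" if "1 \<le> i" "i \<le> int 32" for i
  proof -
    have "i \<in> set [1..32]" using that by (simp only: set_upto atLeastAtMost_iff) arith
    then show ?thesis using alta by blast
  qed
  show ?thesis unfolding NN_def BS_def using len pm ac alt by auto
qed

definition "Ab = ([-1, -1, 1, -1, 1, -1, 1, -1, 1, 1, 1, 1, -1, -1, 1, 1, -1, 1, -1, 1, 1, -1, -1, -1, -1, -1, -1, 1, -1, 1, 1, -1, -1, 1, 1] :: int list)"
definition "Bb = ([-1, 1, 1, 1, 1, 1, 1, 1, 1, -1, 1, -1, -1, 1, 1, -1, -1, -1, -1, -1, 1, 1, -1, 1, -1, 1, -1, -1, -1, -1, 1, 1, -1, -1, -1] :: int list)"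
definition "Cb = ([1, -1, -1, -1, -1, -1, 1, -1, 1, 1, -1, -1, 1, -1, 1, -1, -1, -1, -1, 1, 1, 1, 1, -1, -1, -1, 1, -1, -1, 1, 1, -1, -1, 1] :: int list)"
definition "Db = ([1, 1, 1, 1, -1, 1, 1, 1, -1, 1, -1, 1, 1, -1, 1, -1, 1, 1, -1, 1, 1, 1, -1, -1, -1, 1, -1, -1, 1, 1, -1, 1, 1, 1] :: int list)"

lemma chkb: "\<forall>i\<in>set [-34..34]. autocorr Ab i + autocorr Bb i + autocorr Cb i + autocorr Db i = (if i = 0 then 2 * (int 35 + int 34) else 0)"
  unfolding autocorr_list seq_at_def Ab_def Bb_def Cb_def Db_def by code_simp

lemma altb: "\<forall>i\<in>set [1..34]. seq_at Bb i = (-1) ^ nat (i - 1) * seq_at Ab i"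
  unfolding seq_at_def Ab_def Bb_def by code_simp

lemma memb: "(Ab, Bb, Cb, Db) \<in> NN 34"
proof -
  have len: "length Ab = 35" "length Bb = 35" "length Cb = 34" "length Db = 34"
    by (simp_all add: Ab_def Bb_def Cb_def Db_def)
  have pm: "pm1_seq Ab" "pm1_seq Bb" "pm1_seq Cb" "pm1_seq Db"
    by (simp_all add: pm1_seq_def Ab_def Bb_def Cb_def Db_def)
  have ac: "autocorr Ab i + autocorr Bb i + autocorr Cb i + autocorr Db i =
                (if i = 0 then 2 * (int 35 + int 34) else 0)" for i
  proof (cases "\<bar>i\<bar> \<le> 34")
    case True
    then have "i \<in> set [-34..34]" by (simp only: set_upto atLeastAtMost_iff) arith
    then show ?thesis using chkb by blast
  next
    case False
    then have "i \<noteq> 0" by auto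
    moreover have "autocorr Ab i = 0" "autocorr Bb i = 0" "autocorr Cb i = 0" "autocorr Db i = 0"
      using False by (auto intro!: autocorr_out simp: len)
    ultimately show ?thesis by simp
  qed
  have alt: "seq_at Bb i = (-1) ^ nat (i - 1) * seq_at Ab i" if "1 \<le> i" "i \<le> int 34" for i
  proof -
    have "i \<in> set [1..34]" using that by (simp only: set_upto atLeastAtMost_iff) arith
    then show ?thesis using altb by blast
  qed
  show ?thesis unfolding NN_def BS_def using len pm ac alt by auto
qed

theorem proposition1:
  shows "NN 32 \<noteq> {} \<and> NN 34 \<noteq> {}"
  using mema memb by blast

end
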